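(* Let $\langle X,d\rangle$ be a metric space. Then the family of real-valued strongly uniformly locally Lipschitz functions on $X$ is closed under pointwise multiplication if and only if $X$ is strongly uniformly locally bounded.
   Context: For $\varepsilon>0$, an $\varepsilon$-chain joining $x,y\in X$ is a finite sequence $x=x_0,\dots,x_n=y$ with $d(x_{i-1},x_i)<\varepsilon$; $S^\infty_d(x,\varepsilon)$ is the set of points joinable to $x$ by an $\varepsilon$-chain. $X$ is strongly uniformly locally bounded if there is $\delta>0$ such that $S^\infty_d(x,\delta)$ is bounded for every $x\in X$. A function $f:X\to\mathbb{R}$ is strongly uniformly locally Lipschitz if there is $\delta>0$ such that for every $x\in X$ the restriction of $f$ to $S^\infty_d(x,\delta)$ is Lipschitz (constant may depend on $x$). *)

theory Defs
  imports "HOL-Analysis.Analysis"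
begin

text \<open>The metric space X is the whole carrier of a type of class metric_space, with d = dist.\<close>

definition eps_chain :: "real \<Rightarrow> 'a::metric_space \<Rightarrow> 'a \<Rightarrow> bool" where
  "eps_chain e x y \<longleftrightarrow>
     (\<exists>(n::nat) (p::nat \<Rightarrow> 'a). p 0 = x \<and> p n = y \<and> (\<forall>i<n. dist (p i) (p (Suc i)) < e))"

definition chain_set :: "'a::metric_space \<Rightarrow> real \<Rightarrow> 'a set" where
  "chain_set x e = {y. eps_chain e x y}"

definition strongly_uniformly_locally_bounded :: "'a::metric_space itself \<Rightarrow> bool" where
  "strongly_uniformly_locally_bounded _ \<longleftrightarrow>
     (\<exists>\<delta>>0. \<forall>x::'a. bounded (chain_set x \<delta>))"

definition strongly_uniformly_locally_lipschitz :: "('a::metric_space \<Rightarrow> real) \<Rightarrow> bool" where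
  "strongly_uniformly_locally_lipschitz f \<longleftrightarrow>
     (\<exists>\<delta>>0. \<forall>x. \<exists>C. C-lipschitz_on (chain_set x \<delta>) f)"

end

theory Submission
  imports Defs
begin

lemma eps_chain_mono: "eps_chain e x y \<Longrightarrow> e \<le> e' \<Longrightarrow> eps_chain e' x y"
proof -
  assume a: "eps_chain e x y" and le: "e \<le> e'"
  then obtain n p where "p 0 = x" "p n = y" "\<forall>i<n. dist (p i) (p (Suc i)) < e"
    unfolding eps_chain_def by blast
  moreover have "\<forall>i<n. dist (p i) (p (Suc i)) < e'" using calculation(3) le by force
  ultimately show ?thesis unfolding eps_chain_def by blast
qed

lemma chain_set_mono: "e \<le> e' \<Longrightarrow> chain_set x e \<subseteq> chain_set x e'"
  unfolding chain_set_def using eps_chain_mono by blast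

lemma self_in_chain_set: "x \<in> chain_set x e"
  unfolding chain_set_def eps_chain_def by (rule CollectI, rule exI[of _ 0], auto)

lemma lip_bounded:
  fixes f :: "'a::metric_space \<Rightarrow> real"
  assumes "C-lipschitz_on S f" "bounded S" "x \<in> S"
  shows "\<exists>M. \<forall>y\<in>S. \<bar>f y\<bar> \<le> M"
proof -
  obtain e where e: "\<forall>y\<in>S. dist x y \<le> e" using assms(2) bounded_any_center by blast
  have "C \<ge> 0" using assms(1) lipschitz_on_nonneg by blast
  have "\<bar>f y\<bar> \<le> \<bar>f x\<bar> + C * e" if "y \<in> S" for y
  proof -
    have "dist (f x) (f y) \<le> C * dist x y" using lipschitz_onD[OF assms(1) assms(3) that] .
    also have "\<dots> \<le> C * e" using e that \<open>C \<ge> 0\<close> by (simp add: mult_left_mono)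
    finally show ?thesis by (simp add: dist_real_def)
  qed
  thus ?thesis by blast
qed

lemma lip_mult:
  fixes f g :: "'a::metric_space \<Rightarrow> real"
  assumes "C-lipschitz_on S f" "D-lipschitz_on S g" "\<forall>y\<in>S. \<bar>f y\<bar> \<le> M" "\<forall>y\<in>S. \<bar>g y\<bar> \<le> N"
    "y0 \<in> S"
  shows "(M*D + N*C)-lipschitz_on S (\<lambda>x. f x * g x)"
proof (rule lipschitz_onI)
  have C: "C \<ge> 0" and D: "D \<ge> 0" using assms lipschitz_on_nonneg by blast+
  have M: "M \<ge> 0" using assms(3,5) by force
  have N: "N \<ge> 0" using assms(4,5) by force
  show "0 \<le> M*D + N*C" using C D M N by simp
  fix a b assume a: "a \<in> S" and b: "b \<in> S"
  have fa: "\<bar>f a - f b\<bar> \<le> C * dist a b" using lipschitz_onD[OF assms(1) a b] by (simp add: dist_real_def)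
  have gb: "\<bar>g a - g b\<bar> \<le> D * dist a b" using lipschitz_onD[OF assms(2) a b] by (simp add: dist_real_def)
  have "f a * g a - f b * g b = f a * (g a - g b) + g b * (f a - f b)" by algebra
  hence "\<bar>f a * g a - f b * g b\<bar> \<le> \<bar>f a\<bar> * \<bar>g a - g b\<bar> + \<bar>g b\<bar> * \<bar>f a - f b\<bar>"
    by (simp add: abs_mult[symmetric] abs_triangle_ineq)
  also have "\<dots> \<le> M * (D * dist a b) + N * (C * dist a b)"
    apply (rule add_mono; rule mult_mono)
    using assms(3,4) a b fa gb M N by auto
  finally show "dist (f a * g a) (f b * g b) \<le> (M*D + N*C) * dist a b"
    by (simp add: dist_real_def algebra_simps)
qed

theorem mainTheorem5:
  shows "(\<forall>f g :: 'a::metric_space \<Rightarrow> real.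
            strongly_uniformly_locally_lipschitz f \<and> strongly_uniformly_locally_lipschitz g
            \<longrightarrow> strongly_uniformly_locally_lipschitz (\<lambda>x. f x * g x))
         \<longleftrightarrow> strongly_uniformly_locally_bounded TYPE('a)"
proof
  assume H: "\<forall>f g :: 'a::metric_space \<Rightarrow> real.
            strongly_uniformly_locally_lipschitz f \<and> strongly_uniformly_locally_lipschitz g
            \<longrightarrow> strongly_uniformly_locally_lipschitz (\<lambda>x. f x * g x)"
  define x0 :: 'a where "x0 = undefined"
  define f where "f = (\<lambda>y. dist y x0)"
  have fl: "strongly_uniformly_locally_lipschitz f"
    unfolding strongly_uniformly_locally_lipschitz_def
  proof (rule exI[of _ 1], intro conjI allI)
    fix x :: 'a
    have "1-lipschitz_on (chain_set x 1) f"
      unfolding f_def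
    proof (rule lipschitz_onI)
      fix a b :: 'a
      have "dist a x0 \<le> dist a b + dist b x0" by (rule dist_triangle)
      moreover have "dist b x0 \<le> dist b a + dist a x0" by (rule dist_triangle)
      ultimately show "dist (dist a x0) (dist b x0) \<le> 1 * dist a b"
        by (simp add: dist_real_def dist_commute[of b a])
    qed simp
    thus "\<exists>C. C-lipschitz_on (chain_set x 1) f" by blast
  qed simp
  then obtain \<delta> where d: "\<delta> > 0" "\<forall>x. \<exists>C. C-lipschitz_on (chain_set x \<delta>) (\<lambda>x. f x * f x)"
    using H unfolding strongly_uniformly_locally_lipschitz_def by blast
  show "strongly_uniformly_locally_bounded TYPE('a)"
    unfolding strongly_uniformly_locally_bounded_def
  proof (rule exI[of _ \<delta>], intro conjI allI)
    show "\<delta> > 0" by fact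
    fix x :: 'a
    obtain C where C: "C-lipschitz_on (chain_set x \<delta>) (\<lambda>x. f x * f x)" using d by blast
    have x: "x \<in> chain_set x \<delta>" by (rule self_in_chain_set)
    have "f y \<le> f x + C" if y: "y \<in> chain_set x \<delta>" for y
    proof -
      have "\<bar>f y * f y - f x * f x\<bar> \<le> C * dist y x"
        using lipschitz_onD[OF C y x] by (simp add: dist_real_def)
      also have "dist y x \<le> f y + f x" unfolding f_def using dist_triangle[of y x x0] by (simp add: dist_commute[of x0 x])
      hence "C * dist y x \<le> C * (f y + f x)" using lipschitz_on_nonneg[OF C] by (simp add: mult_left_mono)
      finally have 1: "\<bar>(f y - f x) * (f y + f x)\<bar> \<le> C * (f y + f x)" by (simp add: algebra_simps)
      have pos: "f y \<ge> 0" "f x \<ge> 0" unfolding f_def by auto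
      show ?thesis
      proof (cases "f y + f x = 0")
        case True thus ?thesis using pos C lipschitz_on_nonneg by force
      next
        case False
        hence p: "f y + f x > 0" using pos by linarith
        have "(f y - f x) * (f y + f x) \<le> C * (f y + f x)" using 1 by linarith
        hence "f y - f x \<le> C" using p by (simp add: mult_le_cancel_right)
        thus ?thesis by linarith
      qed
    qed
    thus "bounded (chain_set x \<delta>)"
      unfolding bounded_any_center[of _ x0] f_def by (metis dist_commute)
  qed
next
  assume "strongly_uniformly_locally_bounded TYPE('a)"
  then obtain \<delta>0 where d0: "\<delta>0 > 0" "\<forall>x::'a. bounded (chain_set x \<delta>0)"
    unfolding strongly_uniformly_locally_bounded_def by blast
  show "\<forall>f g :: 'a::metric_space \<Rightarrow> real.
            strongly_uniformly_locally_lipschitz f \<and> strongly_uniformly_locally_lipschitz g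
            \<longrightarrow> strongly_uniformly_locally_lipschitz (\<lambda>x. f x * g x)"
  proof (intro allI impI)
    fix f g :: "'a \<Rightarrow> real"
    assume "strongly_uniformly_locally_lipschitz f \<and> strongly_uniformly_locally_lipschitz g"
    then obtain \<delta>1 \<delta>2 where d1: "\<delta>1 > 0" "\<forall>x. \<exists>C. C-lipschitz_on (chain_set x \<delta>1) f"
      and d2: "\<delta>2 > 0" "\<forall>x. \<exists>C. C-lipschitz_on (chain_set x \<delta>2) g"
      unfolding strongly_uniformly_locally_lipschitz_def by blast
    define \<delta> where "\<delta> = min \<delta>0 (min \<delta>1 \<delta>2)"
    show "strongly_uniformly_locally_lipschitz (\<lambda>x. f x * g x)"
      unfolding strongly_uniformly_locally_lipschitz_def
    proof (rule exI[of _ \<delta>], intro conjI allI)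
      show "\<delta> > 0" using d0 d1 d2 \<delta>_def by simp
      fix x :: 'a
      let ?S = "chain_set x \<delta>"
      have s0: "?S \<subseteq> chain_set x \<delta>0" and s1: "?S \<subseteq> chain_set x \<delta>1" and s2: "?S \<subseteq> chain_set x \<delta>2"
        by (rule chain_set_mono, simp add: \<delta>_def)+
      obtain C where C: "C-lipschitz_on ?S f" using d1 s1 lipschitz_on_subset by blast
      obtain D where D: "D-lipschitz_on ?S g" using d2 s2 lipschitz_on_subset by blast
      have b: "bounded ?S" using d0 s0 bounded_subset by blast
      have x: "x \<in> ?S" by (rule self_in_chain_set)
      obtain M where M: "\<forall>y\<in>?S. \<bar>f y\<bar> \<le> M" using lip_bounded[OF C b x] by blast
      obtain N where N: "\<forall>y\<in>?S. \<bar>g y\<bar> \<le> N" using lip_bounded[OF D b x] by blast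
      show "\<exists>C. C-lipschitz_on ?S (\<lambda>x. f x * g x)" using lip_mult[OF C D M N x] by blast
    qed
  qed
qed

end
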